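(* Let $X=[0,\bar a]$ be a nonempty interval and $f:X\to X$ satisfy: (i) $f$ is strictly concave and Lipschitz continuous; (ii) $f(x)\ge 0$ for all $x\in X$; (iii) letting $\bar x\in X$ be the point at which $f$ attains its maximum on $X$ (so $f$ is strictly increasing on $I=[0,\bar x)$ and strictly decreasing on $D=[\bar x,\bar a]$), the restriction of $f$ to $D$ is $L$-Lipschitz with $L<1$; (iv) there is a positive $b\in X$ with $f(b)<b$. Then for every $x_0\in X$, the fixed-point iteration $x_{k+1}=f(x_k)$ converges to a fixed point of $f$.
   Context: A function $f$ is $L$-Lipschitz if $|f(x)-f(y)|\le L|x-y|$ for all $x,y$; Lipschitz continuous if it is $L$-Lipschitz for some $L>0$. $f$ is strictly concave if $f((1-\lambda)x+\lambda y)>(1-\lambda)f(x)+\lambda f(y)$ for all $x\ne y$ and $0<\lambda<1$. *)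

theory Defs
  imports "HOL-Analysis.Analysis"
begin

definition strictly_concave_on :: "real set \<Rightarrow> (real \<Rightarrow> real) \<Rightarrow> bool" where
  "strictly_concave_on S f \<longleftrightarrow>
     (\<forall>x\<in>S. \<forall>y\<in>S. \<forall>t::real. x \<noteq> y \<and> 0 < t \<and> t < 1 \<longrightarrow>
        f ((1 - t) * x + t * y) > (1 - t) * f x + t * f y)"

end

theory Submission
  imports Defs "HOL-Analysis.Analysis"
begin


lemma three_point:
  fixes f :: "real \<Rightarrow> real"
  assumes conc: "strictly_concave_on {0..a} f"
    and h: "0 \<le> u" "u < v" "v < w" "w \<le> a"
  shows "(w-u)*f v > (w-v)*f u + (v-u)*f w"
proof -
  define t where "t = (v-u)/(w-u)"
  have t0: "0 < t" "t < 1" using h by (auto simp: t_def field_simps)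
  have tw: "t * (w - u) = v - u" using h by (simp add: t_def)
  have tv: "(1 - t) * u + t * w = v" using tw by (simp add: algebra_simps)
  have "f ((1 - t) * u + t * w) > (1 - t) * f u + t * f w"
    using conc h t0 unfolding strictly_concave_on_def by auto
  hence "f v > (1 - t) * f u + t * f w" using tv by simp
  hence "(w-u) * f v > (w-u) * ((1 - t) * f u + t * f w)"
    using h by (intro mult_strict_left_mono) auto
  also have "(w-u) * ((1 - t) * f u + t * f w) = (w-u)*f u - (t*(w-u))*f u + (t*(w-u))*f w"
    by (simp add: algebra_simps)
  also have "\<dots> = (w-v)*f u + (v-u)*f w"
    unfolding tw by (simp add: algebra_simps)
  finally show ?thesis by simp
qed

lemma limit_fixed:
  fixes f :: "real \<Rightarrow> real"
  assumes s: "\<And>k. s (Suc k) = f (s k)" "\<And>k. s k \<in> {0..a}"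
    and cont: "continuous_on {0..a} f" and lim: "s \<longlonglongrightarrow> l"
  shows "l \<in> {0..a} \<and> f l = l"
proof -
  have "0 \<le> l" using lim s(2) by (intro LIMSEQ_le_const[OF lim]) auto
  moreover have "l \<le> a" using lim s(2) by (intro LIMSEQ_le_const2[OF lim]) auto
  ultimately have l: "l \<in> {0..a}" by simp
  have "(\<lambda>k. f (s k)) \<longlonglongrightarrow> f l"
    by (rule continuous_on_tendsto_compose[OF cont lim l]) (use s(2) in auto)
  hence "(\<lambda>k. s (Suc k)) \<longlonglongrightarrow> f l" using s(1) by simp
  moreover have "(\<lambda>k. s (Suc k)) \<longlonglongrightarrow> l" using lim by (rule LIMSEQ_Suc)
  ultimately have "f l = l" using LIMSEQ_unique by blast
  with l show ?thesis by simp
qed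

lemma seq_conv:
  fixes f :: "real \<Rightarrow> real"
  assumes s: "\<And>k. s (Suc k) = f (s k)" "\<And>k. s k \<in> {0..a}"
    and cont: "continuous_on {0..a} f"
    and p: "0 \<le> p" "p \<le> a" and L: "0 \<le> L" "L < 1"
    and P1: "\<And>x. 0 \<le> x \<Longrightarrow> x \<le> p \<Longrightarrow> x \<le> f x"
    and P2: "\<And>x. p \<le> x \<Longrightarrow> x \<le> a \<Longrightarrow> f x \<le> x"
    and U: "\<And>x. 0 \<le> x \<Longrightarrow> x \<le> p \<Longrightarrow> f x - p \<le> L * (p - x)"
    and V: "\<And>x. p \<le> x \<Longrightarrow> x \<le> a \<Longrightarrow> p - f x \<le> L * (x - p)"
  shows "\<exists>l\<in>{0..a}. f l = l \<and> s \<longlonglongrightarrow> l"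
proof -
  define cross where "cross k \<longleftrightarrow> (s k \<le> p \<and> p \<le> s (Suc k)) \<or> (p \<le> s k \<and> s (Suc k) \<le> p)" for k
  define d where "d k = \<bar>s k - p\<bar>" for k
  have sk: "0 \<le> s k" "s k \<le> a" for k using s(2)[of k] by auto
  have dnon: "d (Suc k) \<le> d k" for k
  proof (cases "s k \<le> p")
    case True
    then show ?thesis using P1[OF sk(1) True] U[OF sk(1) True] L s(1)[of k]
      unfolding d_def by (smt (verit, ccfv_SIG) mult_left_le_one_le)
  next
    case False
    then show ?thesis using P2[OF _ sk(2), of k] V[OF _ sk(2), of k] L s(1)[of k]
      unfolding d_def by (smt (verit, ccfv_SIG) mult_left_le_one_le)
  qed
  have dcross: "cross k \<Longrightarrow> d (Suc k) \<le> L * d k" for k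
    using U[OF sk(1), of k] V[OF _ sk(2), of k] L s(1)[of k]
    unfolding d_def cross_def by (smt (verit, ccfv_SIG) mult_left_le_one_le)
  have mono_case: "\<exists>l\<in>{0..a}. f l = l \<and> s \<longlonglongrightarrow> l"
    if "(\<lambda>n. s (n + N)) \<longlonglongrightarrow> l" for N l
  proof -
    have "s \<longlonglongrightarrow> l" using that by (rule LIMSEQ_offset)
    thus ?thesis using limit_fixed[of s f a, OF s cont] by blast
  qed
  show ?thesis
  proof (cases "\<forall>N. \<exists>k\<ge>N. cross k")
    case True
    have dec: "decseq d" using dnon by (simp add: decseq_SucI)
    have pw: "\<exists>N. \<forall>k\<ge>N. d k \<le> L^n * d 0" for n
    proof (induction n)
      case 0
      then show ?case using dec by (auto simp: decseq_def)
    next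
      case (Suc n)
      then obtain N where N: "\<forall>k\<ge>N. d k \<le> L^n * d 0" by blast
      obtain k where k: "k \<ge> N" "cross k" using True by blast
      have "\<forall>j\<ge>Suc k. d j \<le> L^(Suc n) * d 0"
      proof (intro allI impI)
        fix j assume "Suc k \<le> j"
        hence "d j \<le> d (Suc k)" using dec by (auto simp: decseq_def)
        also have "\<dots> \<le> L * d k" using dcross k by blast
        also have "\<dots> \<le> L * (L^n * d 0)" using N k L by (intro mult_left_mono) auto
        finally show "d j \<le> L^(Suc n) * d 0" by simp
      qed
      then show ?case by blast
    qed
    obtain r where r: "d \<longlonglongrightarrow> r" "\<forall>i. r \<le> d i"
      using decseq_convergent[OF dec, of 0] unfolding d_def by auto
    have rle: "r \<le> L^n * d 0" for n
    proof -
      obtain N where N: "\<forall>k\<ge>N. d k \<le> L^n * d 0" using pw by blast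
      show ?thesis using r(2) N by (meson order_trans le_refl)
    qed
    have "(\<lambda>n. L^n * d 0) \<longlonglongrightarrow> 0 * d 0"
      using L by (intro tendsto_mult LIMSEQ_power_zero tendsto_const) auto
    hence "r \<le> 0" using rle by (intro LIMSEQ_le_const[of "\<lambda>n. L^n * d 0"]) auto
    moreover have "0 \<le> r" using r(1) by (rule LIMSEQ_le_const) (auto simp: d_def)
    ultimately have "d \<longlonglongrightarrow> 0" using r(1) by simp
    hence "(\<lambda>k. s k - p) \<longlonglongrightarrow> 0" unfolding d_def by (simp add: tendsto_rabs_zero_iff)
    hence "(\<lambda>k. (s k - p) + p) \<longlonglongrightarrow> 0 + p" by (intro tendsto_add tendsto_const)
    hence "s \<longlonglongrightarrow> p" by simp
    thus ?thesis using limit_fixed[of s f a, OF s cont] by blast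
  next
    case False
    then obtain N where N: "\<forall>k\<ge>N. \<not> cross k" by blast
    show ?thesis
    proof (cases "s N \<le> p")
      case True
      have le: "s (n + N) \<le> p" for n
      proof (induction n)
        case 0 then show ?case using True by simp
      next
        case (Suc n)
        then show ?case using N[rule_format, of "n + N"] unfolding cross_def by auto
      qed
      have "incseq (\<lambda>n. s (n + N))"
        using le P1 sk s(1) by (intro incseq_SucI) auto
      then obtain l where "(\<lambda>n. s (n + N)) \<longlonglongrightarrow> l"
        using incseq_convergent[of "\<lambda>n. s (n + N)" a] sk by blast
      then show ?thesis by (rule mono_case)
    next
      case False
      have ge: "p \<le> s (n + N)" for n
      proof (induction n)
        case 0 then show ?case using False by simp
      next
        case (Suc n)
        then show ?case using N[rule_format, of "n + N"] unfolding cross_def by auto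
      qed
      have "decseq (\<lambda>n. s (n + N))"
        using ge P2 sk s(1) by (intro decseq_SucI) auto
      then obtain l where "(\<lambda>n. s (n + N)) \<longlonglongrightarrow> l"
        using decseq_convergent[of "\<lambda>n. s (n + N)" 0] sk by blast
      then show ?thesis by (rule mono_case)
    qed
  qed
qed


theorem mainTheorem8:
  fixes f :: "real \<Rightarrow> real" and a xbar L :: real
  assumes a_nonneg: "0 \<le> a"
    and maps: "\<forall>x\<in>{0..a}. f x \<in> {0..a}"
    and conc: "strictly_concave_on {0..a} f"
    and lip: "\<exists>K>0. lipschitz_on K {0..a} f"
    and nonneg: "\<forall>x\<in>{0..a}. f x \<ge> 0"
    and xbar: "xbar \<in> {0..a}" "\<forall>x\<in>{0..a}. f x \<le> f xbar"
    and lipD: "lipschitz_on L {xbar..a} f" "L < 1"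
    and b: "\<exists>b\<in>{0..a}. b > 0 \<and> f b < b"
  shows "\<forall>x0\<in>{0..a}. \<exists>p\<in>{0..a}. f p = p \<and> (\<lambda>k. (f ^^ k) x0) \<longlonglongrightarrow> p"
proof -
  obtain K where "lipschitz_on K {0..a} f" using lip by blast
  hence cont: "continuous_on {0..a} f" by (rule lipschitz_on_continuous_on)
  have L0: "0 \<le> L" using lipD(1) by (rule lipschitz_on_nonneg)
  have lipL: "\<bar>f x - f y\<bar> \<le> L * \<bar>x - y\<bar>" if "xbar \<le> x" "x \<le> a" "xbar \<le> y" "y \<le> a" for x y
    using lipschitz_onD[OF lipD(1), of x y] that by (simp add: dist_real_def)
  obtain b where b: "0 \<le> b" "b \<le> a" "0 < b" "f b < b" using b by auto
  define S where "S = {x \<in> {0..b}. x \<le> f x}"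
  have contb: "continuous_on {0..b} f" by (rule continuous_on_subset[OF cont]) (use b in auto)
  have "closed S"
    using continuous_on_closed_Collect_le[OF continuous_on_id contb closed_atLeastAtMost] unfolding S_def by simp
  have "0 \<in> S" unfolding S_def using nonneg a_nonneg b by auto
  have bddS: "bdd_above S" unfolding S_def by (auto intro: bdd_aboveI[of _ b])
  define p where "p = Sup S"
  have pS: "p \<in> S" unfolding p_def using \<open>closed S\<close> \<open>0 \<in> S\<close> bddS
    by (intro closed_contains_Sup) auto
  have pmax: "x \<le> p" if "x \<in> S" for x unfolding p_def using that bddS by (rule cSup_upper)
  have p0: "0 \<le> p" "p \<le> b" "p \<le> f p" using pS unfolding S_def by auto
  have pa: "p \<le> a" using p0 b by simp
  have pb: "p < b" using p0 b by (cases "p = b") auto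
  have fp: "f p = p"
  proof (rule ccontr)
    assume "f p \<noteq> p"
    hence lt: "p - f p \<le> 0" "0 \<le> b - f b" using p0 b by auto
    have "continuous_on {p..b} (\<lambda>x. x - f x)"
      using cont p0 b by (intro continuous_intros continuous_on_subset[OF cont]) auto
    then obtain y where y: "p \<le> y" "y \<le> b" "y - f y = 0"
      using IVT'[of "\<lambda>x. x - f x" p 0 b] lt pb by auto
    have "y \<in> S" unfolding S_def using y p0 by auto
    hence "y = p" using pmax y by force
    thus False using y \<open>f p \<noteq> p\<close> by simp
  qed
  have fxbar: "p \<le> f xbar" using xbar(2) p0 pa fp by (metis atLeastAtMost_iff)
  have P1: "x \<le> f x" if hx: "0 \<le> x" "x \<le> p" for x
  proof -
    consider "x = 0" | "x = p" | "0 < x" "x < p" using hx by argo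
    then show ?thesis
    proof cases
      case 1 then show ?thesis using nonneg a_nonneg by auto
    next
      case 2 then show ?thesis using fp by simp
    next
      case 3
      have "(p-0)*f x > (p-x)*f 0 + (x-0)*f p"
        using three_point[OF conc, of 0 x p] 3 pa by auto
      moreover have "(p-x)*f 0 \<ge> 0" using 3 nonneg a_nonneg by auto
      ultimately have "p * f x > p * x" using fp by (simp add: algebra_simps)
      then show ?thesis using 3 by simp
    qed
  qed
  have P2: "f x \<le> x" if "p \<le> x" "x \<le> a" for x
  proof -
    consider "x \<le> b" | "b < x" by argo
    then show ?thesis
    proof cases
      case 1
      show ?thesis
      proof (rule ccontr)
        assume "\<not> f x \<le> x"
        hence "x \<in> S" unfolding S_def using 1 that p0 by auto
        hence "x \<le> p" by (rule pmax)
        hence "x = p" using that by simp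
        thus False using fp \<open>\<not> f x \<le> x\<close> by simp
      qed
    next
      case 2
      have tp: "(x-p)*f b > (x-b)*f p + (b-p)*f x"
        using three_point[OF conc, of p b x] 2 pb p0 that by auto
      show ?thesis
      proof (rule ccontr)
        assume "\<not> f x \<le> x"
        hence "(b-p)*f x \<ge> (b-p)*x" using pb by (intro mult_left_mono) auto
        hence "(x-p)*f b > (x-p)*b" using tp fp by (simp add: algebra_simps)
        hence "f b > b" using 2 pb by (simp add: mult_less_cancel_left)
        thus False using b by simp
      qed
    qed
  qed
  have U: "f x - p \<le> L * (p - x)" if "0 \<le> x" "x \<le> p" for x
  proof -
    consider "xbar \<le> x" | "x < xbar" "p \<le> xbar" | "x < xbar" "xbar < p" by argo
    then show ?thesis
    proof cases
      case 1 then show ?thesis using lipL[of x p] that pa fp by auto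
    next
      case 2
      have "f x \<le> p"
      proof (cases "x = p \<or> p = xbar")
        case True then show ?thesis using fp xbar that pa by auto
      next
        case False
        hence h: "x < p" "p < xbar" using that 2 by auto
        have "(xbar-x)*f p > (xbar-p)*f x + (p-x)*f xbar"
          using three_point[OF conc, of x p xbar] h that xbar by auto
        moreover have "(p-x)*f xbar \<ge> (p-x)*f x"
          using xbar h that by (intro mult_left_mono) auto
        ultimately have "(xbar-x)*p > (xbar-x)*f x" using fp by (simp add: algebra_simps)
        then show ?thesis using h by (simp add: mult_less_cancel_left)
      qed
      then show ?thesis using L0 that by (smt (verit) mult_nonneg_nonneg)
    next
      case 3
      have tp: "(p-x)*f xbar > (p-xbar)*f x + (xbar-x)*p"
        using three_point[OF conc, of x xbar p] 3 that fp pa by auto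
      have "f xbar - p \<le> L * (p - xbar)" using lipL[of xbar p] 3 pa fp by auto
      hence "(p-x)*f xbar \<le> (p-x)*(p + L*(p-xbar))" using 3 by (intro mult_left_mono) auto
      hence "(p-xbar)*f x < (p-xbar)*(p + L*(p-x))" using tp by (simp add: algebra_simps)
      hence "f x < p + L*(p-x)" using 3 by (simp add: mult_less_cancel_left)
      then show ?thesis by simp
    qed
  qed
  have V: "p - f x \<le> L * (x - p)" if "p \<le> x" "x \<le> a" for x
  proof -
    consider "xbar \<le> p" | "p < xbar" "x \<le> xbar" | "p < xbar" "xbar < x" by argo
    then show ?thesis
    proof cases
      case 1 then show ?thesis using lipL[of x p] that pa fp by auto
    next
      case 2
      have "p \<le> f x"
      proof (cases "x = p \<or> x = xbar")
        case True then show ?thesis using fp fxbar by auto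
      next
        case False
        hence h: "p < x" "x < xbar" using that 2 by auto
        have "(xbar-p)*f x > (xbar-x)*f p + (x-p)*f xbar"
          using three_point[OF conc, of p x xbar] h p0 xbar by auto
        moreover have "(x-p)*f xbar \<ge> (x-p)*p"
          using fxbar h by (intro mult_left_mono) auto
        ultimately have "(xbar-p)*f x > (xbar-p)*p" using fp by (simp add: algebra_simps)
        then show ?thesis using h by (simp add: mult_less_cancel_left)
      qed
      then show ?thesis using L0 that by (smt (verit) mult_nonneg_nonneg)
    next
      case 3
      have "f xbar - f x \<le> L * (x - xbar)" using lipL[of xbar x] 3 that by auto
      moreover have "L * (x - xbar) \<le> L * (x - p)" using L0 3 by (intro mult_left_mono) auto
      ultimately show ?thesis using fxbar by linarith
    qed
  qed
  show ?thesis
  proof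
    fix x0 assume x0: "x0 \<in> {0..a}"
    define s where "s k = (f ^^ k) x0" for k
    have s1: "s (Suc k) = f (s k)" for k by (simp add: s_def)
    have s2: "s k \<in> {0..a}" for k
      by (induction k) (use x0 maps in \<open>auto simp: s_def\<close>)
    have "\<exists>l\<in>{0..a}. f l = l \<and> s \<longlonglongrightarrow> l"
      by (rule seq_conv[of s f a p L, OF s1 s2 cont p0(1) pa L0 lipD(2) P1 P2 U V])
    moreover have "s = (\<lambda>k. (f ^^ k) x0)" by (rule ext) (simp add: s_def)
    ultimately show "\<exists>p\<in>{0..a}. f p = p \<and> (\<lambda>k. (f ^^ k) x0) \<longlonglongrightarrow> p"
      by simp
  qed
qed

end
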